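(* There does not exist a countably additive exchangeable probability measure $P$ on $(\mathbb{R}^\infty,\mathcal B(\mathbb{R})^{\otimes\infty})$ for the coordinate sequence $Y_1,Y_2,\dots$ such that, for every $n\ge1$ and every $k\in\{0,\dots,n\}$, \[ P\big(Y_{n+1}\in I_k(Y_{1:n})\,\big|\,Y_{1:n}\big)=\frac{1}{n+1}\quad P\text{-a.s.}, \] where the conditional probability is the regular conditional distribution of $Y_{n+1}$ given $Y_{1:n}$ under $P$.
   Context: For $y_{1:n}\in\mathbb{R}^n$ with order statistics $y_{(1)}\le\cdots\le y_{(n)}$ and conventions $y_{(0)}=-\infty$, $y_{(n+1)}=+\infty$, the order-statistic cells are $I_k(y_{1:n})=(y_{(k)},y_{(k+1)}]$ for $k=0,\dots,n$. A probability measure on $\mathbb{R}^\infty$ is exchangeable if the joint law of $(Y_1,\dots,Y_n)$ is invariant under every permutation of the coordinates, for every $n$. *)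

theory Defs
  imports "HOL-Probability.Probability"
begin

text \<open>Coordinates are 0-indexed: Y_1,...,Y_n correspond to w 0,...,w (n-1), and Y_{n+1} to w n.\<close>

abbreviation R_inf :: "(nat \<Rightarrow> real) measure" where
  "R_inf \<equiv> PiM UNIV (\<lambda>_. borel)"

definition first_n :: "nat \<Rightarrow> (nat \<Rightarrow> real) \<Rightarrow> (nat \<Rightarrow> real)" where
  "first_n n w = restrict w {..<n}"

definition exchangeable :: "(nat \<Rightarrow> real) measure \<Rightarrow> bool" where
  "exchangeable P \<longleftrightarrow> (\<forall>n \<sigma>. \<sigma> permutes {..<n} \<longrightarrow>
      distr P (PiM {..<n} (\<lambda>_. borel)) (\<lambda>w. first_n n (w \<circ> \<sigma>))
    = distr P (PiM {..<n} (\<lambda>_. borel)) (\<lambda>w. first_n n w))"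

definition order_stat :: "nat \<Rightarrow> (nat \<Rightarrow> real) \<Rightarrow> nat \<Rightarrow> ereal" where
  "order_stat n w k =
     (if k = 0 then -\<infinity> else if k > n then \<infinity>
      else ereal (sort (map w [0..<n]) ! (k - 1)))"

definition cell :: "nat \<Rightarrow> (nat \<Rightarrow> real) \<Rightarrow> nat \<Rightarrow> real set" where
  "cell n w k = {x. order_stat n w k < ereal x \<and> ereal x \<le> order_stat n w (k + 1)}"

definition sigma_first :: "(nat \<Rightarrow> real) measure \<Rightarrow> nat \<Rightarrow> (nat \<Rightarrow> real) measure" where
  "sigma_first P n = vimage_algebra (space P) (first_n n) (PiM {..<n} (\<lambda>_. borel))"

definition cell_event :: "nat \<Rightarrow> nat \<Rightarrow> (nat \<Rightarrow> real) set" where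
  "cell_event n k = {w. w n \<in> cell n w k}"

end

theory Submission
  imports Defs
begin

lemma cell_event_1_0: "cell_event 1 0 = {w. w 1 \<le> w 0}"
  by (auto simp: cell_event_def cell_def order_stat_def)

lemma first_n_meas: "first_n n \<in> measurable R_inf (PiM {..<n} (\<lambda>_. borel))"
  unfolding first_n_def by (rule measurable_restrict_subset) auto

lemma pi_le[measurable]: "i \<in> I \<Longrightarrow> j \<in> I \<Longrightarrow> Measurable.pred (PiM I (\<lambda>_. borel)) (\<lambda>w. (w i::real) \<le> w j)"
  unfolding pred_def by (intro borel_measurable_le measurable_component_singleton) simp_all

lemma pi_lec[measurable]: "i \<in> I \<Longrightarrow> Measurable.pred (PiM I (\<lambda>_. borel)) (\<lambda>w. (w i::real) \<le> c)"
  unfolding pred_def by (intro borel_measurable_le measurable_component_singleton measurable_const) simp_all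

theorem mainTheorem3:
  shows "\<not> (\<exists>P :: (nat \<Rightarrow> real) measure.
            prob_space P \<and> sets P = sets R_inf \<and> exchangeable P \<and>
            (\<forall>n\<ge>1. \<forall>k\<le>n.
               AE w in P. real_cond_exp P (sigma_first P n) (indicator (cell_event n k)) w
                          = 1 / real (n + 1)))"
proof
  assume "\<exists>P :: (nat \<Rightarrow> real) measure.
            prob_space P \<and> sets P = sets R_inf \<and> exchangeable P \<and>
            (\<forall>n\<ge>1. \<forall>k\<le>n.
               AE w in P. real_cond_exp P (sigma_first P n) (indicator (cell_event n k)) w
                          = 1 / real (n + 1))"
  then obtain P :: "(nat \<Rightarrow> real) measure" where P: "prob_space P" and sP: "sets P = sets R_inf"
    and ex: "exchangeable P"
    and ce: "AE w in P. real_cond_exp P (sigma_first P 1) (indicator {w. w 1 \<le> w 0}) w = 1/2"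
    by (metis (no_types) cell_event_1_0 le_refl zero_le one_add_one of_nat_1 of_nat_add)
  interpret prob_space P by (rule P)
  have spP: "space P = UNIV"
    using sets_eq_imp_space_eq[OF sP] by (simp add: space_PiM)
  have measP: "f \<in> measurable P N" if "f \<in> measurable R_inf N" for f and N :: "'b measure"
    using that measurable_cong_sets[OF sP refl] by blast
  have comp[measurable]: "\<And>i. (\<lambda>w. w i) \<in> borel_measurable R_inf"
    by (rule measurable_component_singleton) simp
  have setP: "{w. Q w} \<in> sets P" if "Measurable.pred R_inf Q" for Q
  proof -
    have "{w \<in> space R_inf. Q w} \<in> sets R_inf" using that by measurable
    then show ?thesis using sP by (simp add: space_PiM)
  qed
  define F where "F = sigma_first P 1"
  have subalg: "subalgebra P F"
    unfolding subalgebra_def F_def sigma_first_def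
  proof
    show "space (vimage_algebra (space P) (first_n 1) (PiM {..<1} (\<lambda>_. borel))) = space P" by simp
    show "sets (vimage_algebra (space P) (first_n 1) (PiM {..<1} (\<lambda>_. borel))) \<subseteq> sets P"
    proof -
      have m: "first_n 1 \<in> measurable P (PiM {..<1} (\<lambda>_. borel))" by (rule measP[OF first_n_meas])
      have "first_n 1 \<in> space P \<rightarrow> space (PiM {..<1} (\<lambda>_. borel))" using m by (simp add: measurable_def)
      then show ?thesis using m by (auto simp: sets_vimage_algebra2 measurable_def)
    qed
  qed
  interpret fms: finite_measure_subalgebra P F
    by unfold_locales (rule subalg)
  define E where "E = {w :: nat \<Rightarrow> real. w 1 \<le> w 0}"
  have E: "E \<in> sets P" unfolding E_def by (rule setP) measurable
  have key: "measure P (A \<inter> E) = measure P A / 2" if A: "A \<in> sets F" for A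
  proof -
    have AP: "A \<in> sets P" using A subalg by (auto simp: subalgebra_def)
    have int: "integrable P (indicator E :: _ \<Rightarrow> real)" using E by (simp add: integrable_indicator_iff spP emeasure_eq_measure)
    have "(\<integral>x\<in>A. indicator E x \<partial>P) = (\<integral>x\<in>A. real_cond_exp P F (indicator E) x \<partial>P)"
      by (rule fms.real_cond_exp_intA[OF int A])
    also have "\<dots> = (\<integral>x\<in>A. 1/2 \<partial>P)"
      unfolding set_lebesgue_integral_def
      by (rule integral_cong_AE) (use ce AP in \<open>auto simp: F_def E_def\<close>)
    finally show ?thesis using AP E
      by (simp add: set_lebesgue_integral_def Int_commute indicator_inter_arith[symmetric] measure_nonneg)
  qed
  have swap: "measure P {w. Q (w 1) (w 0)} = measure P {w. Q (w 0) (w 1)}"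
    if Qm: "Measurable.pred (PiM {..<2::nat} (\<lambda>_. borel)) (\<lambda>y::nat\<Rightarrow>real. Q (y 0) (y 1))" for Q
  proof -
    define \<sigma> :: "nat \<Rightarrow> nat" where "\<sigma> = Transposition.transpose 0 1"
    have perm: "\<sigma> permutes {..<2}" unfolding \<sigma>_def by (rule permutes_swap_id) auto
    define N where "N = PiM {..<2::nat} (\<lambda>_. borel :: real measure)"
    have eq: "distr P N (\<lambda>w. first_n 2 (w \<circ> \<sigma>)) = distr P N (\<lambda>w. first_n 2 w)"
      using ex perm unfolding exchangeable_def N_def by blast
    define S where "S = {y \<in> space N. Q (y 0) (y 1)}"
    have S: "S \<in> sets N" unfolding S_def N_def using Qm by (simp add: pred_def)
    have m1: "(\<lambda>w. first_n 2 (w \<circ> \<sigma>)) \<in> measurable P N"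
    proof -
      have "(\<lambda>w. \<lambda>i\<in>{..<2::nat}. w (\<sigma> i)) \<in> measurable R_inf N"
        unfolding N_def by (intro measurable_restrict measurable_component_singleton) auto
      then show ?thesis by (intro measP) (simp add: first_n_def comp_def)
    qed
    have m2: "(\<lambda>w. first_n 2 w) \<in> measurable P N"
      unfolding N_def by (rule measP[OF first_n_meas])
    have s1: "{w. Q (w 1) (w 0)} = (\<lambda>w. first_n 2 (w \<circ> \<sigma>)) -` S \<inter> space P"
      by (auto simp: S_def N_def spP space_PiM first_n_def \<sigma>_def)
    have s2: "{w. Q (w 0) (w 1)} = (\<lambda>w. first_n 2 w) -` S \<inter> space P"
      by (auto simp: S_def N_def spP space_PiM first_n_def)
    show ?thesis
      using measure_distr[OF m1 S] measure_distr[OF m2 S] eq s1 s2 by simp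
  qed
  have mP[measurable]: "\<And>i j. Measurable.pred R_inf (\<lambda>w. w i \<le> w j)"
    "\<And>i c. Measurable.pred R_inf (\<lambda>w. w i \<le> (c::real))" by simp_all
  have h1: "measure P {w. w 1 \<le> w 0} = 1/2"
  proof -
    have "space P \<in> sets F" using sets.top[of F] subalg by (metis subalgebra_def)
    from key[OF this] show ?thesis using prob_space by (simp add: E_def spP)
  qed
  have Aa: "{w. w 0 \<le> a} \<in> sets F" for a
  proof -
    have "{y \<in> space (PiM {..<1::nat} (\<lambda>_. borel)). (y 0::real) \<le> a} \<in> sets (PiM {..<1::nat} (\<lambda>_. borel))"
      using pi_lec[of 0 "{..<1::nat}" a] by (simp add: pred_def)
    from in_vimage_algebra[OF this, of "first_n 1" "space P"]
    show ?thesis unfolding F_def sigma_first_def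
      by (simp add: spP first_n_def space_PiM vimage_def)
  qed
  have h2: "measure P {w. w 0 \<le> a \<and> w 1 \<le> w 0} = measure P {w. w 0 \<le> a} / 2" for a
    using key[OF Aa[of a]] by (simp add: E_def Int_def)
  have h1': "measure P {w. w 0 \<le> w 1} = 1/2"
    using h1 swap[of "\<lambda>x y. y \<le> x"] by simp
  have h2': "measure P {w. w 1 \<le> a \<and> w 0 \<le> w 1} = measure P {w. w 0 \<le> a} / 2" for a
  proof -
    have "measure P {w. w 1 \<le> a \<and> w 0 \<le> w 1} = measure P {w. w 0 \<le> a \<and> w 1 \<le> w 0}"
      using swap[of "\<lambda>x y. x \<le> a \<and> y \<le> x"] by simp
    then show ?thesis using h2 by simp
  qed
  have marg: "measure P {w. w 1 \<le> a} = measure P {w. w 0 \<le> a}" for a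
    using swap[of "\<lambda>x y. x \<le> a"] by simp
  have T: "{w. w 1 \<le> w 0 \<and> w 0 \<le> w 1} \<in> null_sets P"
  proof -
    have "measure P ({w. w 1 \<le> w 0} \<union> {w. w 0 \<le> w 1}) = measure P {w. w 1 \<le> w 0} + measure P {w. w 0 \<le> w 1} - measure P ({w. w 1 \<le> w 0} \<inter> {w. w 0 \<le> w 1})"
      by (intro measure_Un3) (auto intro!: setP simp: fmeasurable_def emeasure_eq_measure)
    moreover have "{w. w 1 \<le> w 0} \<union> {w. w 0 \<le> w 1} = space P" by (auto simp: spP)
    ultimately have "measure P {w. w 1 \<le> w 0 \<and> w 0 \<le> w 1} = 0"
      using h1 h1' prob_space by (simp add: Int_def)
    moreover have "{w. w 1 \<le> w 0 \<and> w 0 \<le> w 1} \<in> sets P" by (intro setP) measurable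
    ultimately show ?thesis by (simp add: null_sets_def emeasure_eq_measure)
  qed
  have Z: "{w. w 0 \<le> a \<and> \<not> w 1 \<le> a} \<in> null_sets P" for a
  proof -
    let ?B1 = "{w. w 0 \<le> a \<and> w 1 \<le> w 0}" and ?B2 = "{w. w 1 \<le> a \<and> w 0 \<le> w 1}"
    have B1: "?B1 \<in> sets P" and B2: "?B2 \<in> sets P" by (intro setP; measurable)+
    have U: "measure P (?B1 \<union> ?B2) = measure P ?B1 + measure P ?B2 - measure P (?B1 \<inter> ?B2)"
      using B1 B2 by (intro measure_Un3) (auto simp: fmeasurable_def emeasure_eq_measure)
    have I0: "measure P (?B1 \<inter> ?B2) = 0"
    proof -
      have "?B1 \<inter> ?B2 \<subseteq> {w. w 1 \<le> w 0 \<and> w 0 \<le> w 1}" by auto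
      then have "?B1 \<inter> ?B2 \<in> null_sets P" using T B1 B2 null_sets_subset by blast
      then show ?thesis by (simp add: measure_def null_setsD1)
    qed
    have Ueq: "?B1 \<union> ?B2 = {w. w 0 \<le> a \<and> w 1 \<le> a}" by auto
    have both: "measure P {w. w 0 \<le> a \<and> w 1 \<le> a} = measure P {w. w 0 \<le> a}"
      using U[unfolded Ueq] I0 h2[of a] h2'[of a] by linarith
    have D: "{w. w 0 \<le> a} = {w. w 0 \<le> a \<and> w 1 \<le> a} \<union> {w. w 0 \<le> a \<and> \<not> w 1 \<le> a}" by auto
    have U2: "measure P ({w. w 0 \<le> a \<and> w 1 \<le> a} \<union> {w. w 0 \<le> a \<and> \<not> w 1 \<le> a})
        = measure P {w. w 0 \<le> a \<and> w 1 \<le> a} + measure P {w. w 0 \<le> a \<and> \<not> w 1 \<le> a}"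
      by (intro finite_measure_Union setP) (measurable, measurable, auto)
    have "measure P {w. w 0 \<le> a \<and> \<not> w 1 \<le> a} = 0" using U2[folded D] both by linarith
    moreover have "{w. w 0 \<le> a \<and> \<not> w 1 \<le> a} \<in> sets P" by (intro setP) measurable
    ultimately show ?thesis by (simp add: null_sets_def emeasure_eq_measure)
  qed
  have "AE w in P. \<forall>q\<in>\<rat>. w \<notin> {w. w 0 \<le> q \<and> \<not> w 1 \<le> q}"
    by (intro AE_ball_countable' AE_not_in Z countable_rat)
  then have AEn: "AE w in P. \<not> w 0 < w 1"
  proof (rule AE_mp, intro AE_I2 impI)
    fix w :: "nat \<Rightarrow> real" assume H: "\<forall>q\<in>\<rat>. w \<notin> {w. w 0 \<le> q \<and> \<not> w 1 \<le> q}"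
    show "\<not> w 0 < w 1"
    proof
      assume "w 0 < w 1"
      then obtain r where "r \<in> \<rat>" "w 0 < r" "r < w 1" using Rats_dense_in_real by blast
      then show False using H by force
    qed
  qed
  have L: "{w. w 0 < w 1} \<in> sets P"
  proof -
    have "{w. w 0 < w 1} = space P - {w. w 1 \<le> w 0}" by (auto simp: spP)
    then show ?thesis using E by (simp add: E_def)
  qed
  have "emeasure P {w. w 0 < w 1} = 0"
    using AEn by (subst (asm) AE_iff_measurable[OF L]) (auto simp: spP)
  moreover have "measure P {w. w 0 < w 1} = 1/2"
  proof -
    have "{w. w 0 < w 1} = space P - {w. w 1 \<le> w 0}" by (auto simp: spP)
    then show ?thesis using prob_compl[of "{w. w 1 \<le> w 0}"] E h1 by (simp add: E_def)
  qed
  ultimately show False by (simp add: emeasure_eq_measure)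
qed

end
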